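(* Suppose $\psi\in\Psi^*$ and $s\in\Omega_2$. Then $\dfrac{F'}{F}(s,\psi)\ll\mathcal{L}\log\mathcal{L}$, where $'$ denotes differentiation in $s$.
   Context: Standing conventions: $\chi$ is a real primitive Dirichlet character of modulus $D$, where $D$ exceeds a sufficiently large absolute constant; implied constants are absolute. $\mathcal{L}=\log D$, $Q=\exp(\mathcal{L}^2)$, $\alpha=\mathcal{L}^{-2}$, $s_0=\tfrac12+iD$. Let $\mathcal{Q}$ be the set of integers $q$ with $Q<q<2Q$, $\gcd(q,6)=1$, $q$ squarefree; $\Psi_q$ the set of primitive characters $\psi\bmod q$ with $\psi\chi$ primitive modulo $\mathrm{lcm}(q,D)$; $\Psi=\bigcup_q\Psi_q$. Define $\nu,\upsilon$ by $\sum\nu(n)n^{-s}=\zeta(s)L(s,\chi)$, $\sum\upsilon(n)n^{-s}=\zeta(s)^{-1}L(s,\chi)^{-1}$; $F(s,\psi)=\sum_{n\le D^5}\nu(n)\psi(n)n^{-s}$, $G(s,\psi)=\sum_{n\le D^5}\upsilon(n)\psi(n)n^{-s}$; $\Delta(s,\psi)=L(s,\psi)/L(1-s,\bar\psi)$, $\Delta_1(s,\psi)=\Delta(s,\psi)\Delta(s,\psi\chi)$, $\mathcal{F}(s,\psi)=F(s,\psi)+\Delta_1(s,\psi)F(1-s,\bar\psi)$. $\Omega_1=\{s:-2\alpha^{1/2}<\mathrm{Re}(s-s_0)<1,\ |\mathrm{Im}(s-s_0)|<1+20\mathcal{L}\}$, $\Omega_2=\{s:-\tfrac1{10}\alpha\log\mathcal{L}<\mathrm{Re}(s-s_0)<\tfrac12,\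 |\mathrm{Im}(s-s_0)|<1+10\mathcal{L}\}$. $\Psi^*$ is the set of $\psi\in\Psi$ with (I1) $\sup_{\Omega_1}\{|F(s,\psi)|+|G(s,\psi)|\}<\mathcal{L}^3\log\mathcal{L}$, (I2) $\sup_{\Omega_1}|F(s,\psi)G(s,\psi)-1|<\tfrac12$, (I3) $\sup_{\Omega_2}|L(s,\psi)L(s,\psi\chi)-\mathcal{F}(s,\psi)|<\mathcal{L}^{-24/5}$. *)

theory Defs
  imports "HOL-Analysis.Analysis" "HOL-Computational_Algebra.Squarefree"
    "HOL-Number_Theory.Cong"
begin

definition dchar :: "nat \<Rightarrow> (nat \<Rightarrow> complex) \<Rightarrow> bool" where
  "dchar q \<psi> \<longleftrightarrow> q > 0 \<and> \<psi> 1 = 1 \<and> (\<forall>m n. \<psi> (m * n) = \<psi> m * \<psi> n)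
     \<and> (\<forall>n. \<psi> (n + q) = \<psi> n) \<and> (\<forall>n. \<psi> n = 0 \<longleftrightarrow> \<not> coprime n q)"

definition primitive_char :: "nat \<Rightarrow> (nat \<Rightarrow> complex) \<Rightarrow> bool" where
  "primitive_char q \<psi> \<longleftrightarrow> dchar q \<psi> \<and>
     \<not> (\<exists>d. d dvd q \<and> d < q \<and> (\<forall>n. coprime n q \<and> [n = 1] (mod d) \<longrightarrow> \<psi> n = 1))"

definition real_primitive_char :: "nat \<Rightarrow> (nat \<Rightarrow> complex) \<Rightarrow> bool" where
  "real_primitive_char D chi \<longleftrightarrow> primitive_char D chi \<and> (\<forall>n. chi n \<in> Reals)"

definition cnj_char :: "(nat \<Rightarrow> complex) \<Rightarrow> nat \<Rightarrow> complex" where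
  "cnj_char \<psi> = (\<lambda>n. cnj (\<psi> n))"

definition mult_char :: "(nat \<Rightarrow> complex) \<Rightarrow> (nat \<Rightarrow> complex) \<Rightarrow> nat \<Rightarrow> complex" where
  "mult_char \<psi> chi = (\<lambda>n. \<psi> n * chi n)"

definition moebius :: "nat \<Rightarrow> complex" where
  "moebius n = (if n > 0 \<and> squarefree n then (-1) ^ card (prime_factors n) else 0)"

text \<open>Coefficients of zeta(s) L(s,chi) and of its reciprocal (Dirichlet convolutions).\<close>
definition nu :: "(nat \<Rightarrow> complex) \<Rightarrow> nat \<Rightarrow> complex" where
  "nu chi n = (\<Sum>d\<in>{d. d dvd n}. chi d)"

definition upsilon :: "(nat \<Rightarrow> complex) \<Rightarrow> nat \<Rightarrow> complex" where
  "upsilon chi n = (\<Sum>d\<in>{d. d dvd n}. moebius d * moebius (n div d) * chi (n div d))"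

definition LL :: "nat \<Rightarrow> real" where "LL D = ln (real D)"
definition QQ :: "nat \<Rightarrow> real" where "QQ D = exp ((LL D)^2)"
definition alpha :: "nat \<Rightarrow> real" where "alpha D = (LL D) powr (-2)"
definition s0 :: "nat \<Rightarrow> complex" where "s0 D = 1/2 + \<i> * of_nat D"

definition Qset :: "nat \<Rightarrow> nat set" where
  "Qset D = {q. QQ D < real q \<and> real q < 2 * QQ D \<and> coprime q 6 \<and> squarefree q}"

definition PsiSet :: "nat \<Rightarrow> (nat \<Rightarrow> complex) \<Rightarrow> (nat \<Rightarrow> complex) set" where
  "PsiSet D chi = {\<psi>. \<exists>q\<in>Qset D. primitive_char q \<psi> \<and>
                   primitive_char (lcm q D) (mult_char \<psi> chi)}"

definition FF :: "nat \<Rightarrow> (nat \<Rightarrow> complex) \<Rightarrow> (nat \<Rightarrow> complex) \<Rightarrow> complex \<Rightarrow> complex" where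
  "FF D chi \<psi> s = (\<Sum>n=1..D^5. nu chi n * \<psi> n * of_nat n powr (-s))"

definition GG :: "nat \<Rightarrow> (nat \<Rightarrow> complex) \<Rightarrow> (nat \<Rightarrow> complex) \<Rightarrow> complex \<Rightarrow> complex" where
  "GG D chi \<psi> s = (\<Sum>n=1..D^5. upsilon chi n * \<psi> n * of_nat n powr (-s))"

text \<open>L(s,psi) as the limit of partial sums of the Dirichlet series; for non-principal
  psi this is the analytic continuation on Re s > 0, which contains every point where it is used.\<close>
definition Lfun :: "(nat \<Rightarrow> complex) \<Rightarrow> complex \<Rightarrow> complex" where
  "Lfun \<psi> s = lim (\<lambda>N. \<Sum>n=1..N. \<psi> n * of_nat n powr (-s))"

definition Delta :: "(nat \<Rightarrow> complex) \<Rightarrow> complex \<Rightarrow> complex" where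
  "Delta \<psi> s = Lfun \<psi> s / Lfun (cnj_char \<psi>) (1 - s)"

definition Delta1 :: "(nat \<Rightarrow> complex) \<Rightarrow> (nat \<Rightarrow> complex) \<Rightarrow> complex \<Rightarrow> complex" where
  "Delta1 chi \<psi> s = Delta \<psi> s * Delta (mult_char \<psi> chi) s"

definition FFcal :: "nat \<Rightarrow> (nat \<Rightarrow> complex) \<Rightarrow> (nat \<Rightarrow> complex) \<Rightarrow> complex \<Rightarrow> complex" where
  "FFcal D chi \<psi> s = FF D chi \<psi> s + Delta1 chi \<psi> s * FF D chi (cnj_char \<psi>) (1 - s)"

definition Omega1 :: "nat \<Rightarrow> complex set" where
  "Omega1 D = {s. - 2 * sqrt (alpha D) < Re (s - s0 D) \<and> Re (s - s0 D) < 1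
                  \<and> \<bar>Im (s - s0 D)\<bar> < 1 + 20 * LL D}"

definition Omega2 :: "nat \<Rightarrow> complex set" where
  "Omega2 D = {s. - (1/10) * alpha D * ln (LL D) < Re (s - s0 D) \<and> Re (s - s0 D) < 1/2
                  \<and> \<bar>Im (s - s0 D)\<bar> < 1 + 10 * LL D}"

definition PsiStar :: "nat \<Rightarrow> (nat \<Rightarrow> complex) \<Rightarrow> (nat \<Rightarrow> complex) set" where
  "PsiStar D chi = {\<psi>. \<psi> \<in> PsiSet D chi
     \<and> (SUP s\<in>Omega1 D. ereal (norm (FF D chi \<psi> s) + norm (GG D chi \<psi> s)))
          < ereal ((LL D)^3 * ln (LL D))
     \<and> (SUP s\<in>Omega1 D. ereal (norm (FF D chi \<psi> s * GG D chi \<psi> s - 1))) < ereal (1/2)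
     \<and> (SUP s\<in>Omega2 D. ereal (norm (Lfun \<psi> s * Lfun (mult_char \<psi> chi) s - FFcal D chi \<psi> s)))
          < ereal ((LL D) powr (-24/5))}"

end

theory Submission
  imports Defs "HOL-Complex_Analysis.Complex_Analysis"
begin

lemma core:
  fixes f :: "complex \<Rightarrow> complex"
  assumes hol: "f holomorphic_on ball z0 R" and nz: "\<And>x. x \<in> ball z0 R \<Longrightarrow> f x \<noteq> 0"
    and bd: "\<And>x. x \<in> ball z0 R \<Longrightarrow> \<bar>ln (norm (f x))\<bar> \<le> M"
    and rho: "0 < \<rho>" "\<rho> < R" and M: "0 < M"
  shows "norm (deriv f z0 / f z0) \<le> 4 * M / \<rho>"
proof -
  have z0: "z0 \<in> ball z0 R" using rho by simp
  obtain g where g: "g holomorphic_on ball z0 R" and eg: "\<And>x. x \<in> ball z0 R \<Longrightarrow> exp (g x) = f x"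
    using holomorphic_logarithm_exists[of "ball z0 R" f z0] hol nz z0 by auto
  have gd: "\<And>x. x \<in> ball z0 R \<Longrightarrow> (g has_field_derivative deriv g x) (at x)"
    using g holomorphic_derivI by blast
  have Reg: "\<And>x. x \<in> ball z0 R \<Longrightarrow> \<bar>Re (g x)\<bar> \<le> M"
  proof -
    fix x assume x: "x \<in> ball z0 R"
    have "norm (f x) = exp (Re (g x))" using eg[OF x] by (metis norm_exp_eq_Re)
    hence "ln (norm (f x)) = Re (g x)" by simp
    thus "\<bar>Re (g x)\<bar> \<le> M" using bd[OF x] by simp
  qed
  have fd: "(f has_field_derivative exp (g z0) * deriv g z0) (at z0)"
  proof (rule has_field_derivative_transform_within_open[where f="\<lambda>x. exp (g x)" and S="ball z0 R"])
    show "((\<lambda>x. exp (g x)) has_field_derivative exp (g z0) * deriv g z0) (at z0)"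
      using gd[OF z0] by (auto intro!: derivative_eq_intros)
  qed (use z0 eg in auto)
  hence df: "deriv f z0 / f z0 = deriv g z0"
    using eg[OF z0] nz[OF z0] by (simp add: DERIV_imp_deriv)
  define u where "u x = g x - g z0" for x
  define \<phi> where "\<phi> x = u x / (u x + 4 * M)" for x
  have Reu: "\<And>x. x \<in> ball z0 R \<Longrightarrow> \<bar>Re (u x)\<bar> \<le> 2 * M"
    using Reg z0 unfolding u_def by (smt (verit) minus_complex.simps(1))
  have den: "\<And>x. x \<in> ball z0 R \<Longrightarrow> u x + 4 * M \<noteq> 0"
  proof
    fix x assume x: "x \<in> ball z0 R" and "u x + 4 * M = 0"
    hence "Re (u x + 4 * M) = 0" by simp
    hence "Re (u x) = - 4 * M" by simp
    thus False using Reu[OF x] M by simp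
  qed
  have uhol: "u holomorphic_on ball z0 R" unfolding u_def by (intro holomorphic_intros g)
  have phol: "\<phi> holomorphic_on ball z0 R" unfolding \<phi>_def
    by (intro holomorphic_intros uhol den) auto
  have pbd: "\<And>x. x \<in> ball z0 R \<Longrightarrow> norm (\<phi> x) \<le> 1"
  proof -
    fix x assume x: "x \<in> ball z0 R"
    obtain a b where ab: "u x = Complex a b" by (metis complex.exhaust)
    have a: "\<bar>a\<bar> \<le> 2 * M" using Reu[OF x] ab by simp
    have "norm (u x) \<le> norm (u x + 4 * M)"
    proof -
      have "a^2 + b^2 \<le> (a + 4*M)^2 + b^2" proof -
        have "(a + 4*M)^2 - a^2 = 8*M*(a + 2*M)" by (simp add: power2_eq_square algebra_simps)
        moreover have "8*M*(a + 2*M) \<ge> 0" using a M by simp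
        ultimately show ?thesis by simp
      qed
      thus ?thesis using ab by (simp add: cmod_def)
    qed
    thus "norm (\<phi> x) \<le> 1" unfolding \<phi>_def using den[OF x] by (simp add: norm_divide divide_le_eq_1)
  qed
  have sub: "cball z0 \<rho> \<subseteq> ball z0 R" using rho by auto
  have "norm ((deriv ^^ 1) \<phi> z0) \<le> fact 1 * 1 / \<rho>^1"
  proof (rule Cauchy_inequality)
    show "\<phi> holomorphic_on ball z0 \<rho>" using phol sub by (meson ball_subset_cball holomorphic_on_subset order_trans)
    show "continuous_on (cball z0 \<rho>) \<phi>"
      using phol sub holomorphic_on_imp_continuous_on continuous_on_subset by blast
    show "\<And>x. norm (z0 - x) = \<rho> \<Longrightarrow> norm (\<phi> x) \<le> 1" using pbd sub by (auto simp: dist_norm)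
  qed (use rho in auto)
  hence dp: "norm (deriv \<phi> z0) \<le> 1 / \<rho>" by simp
  have ud: "(u has_field_derivative deriv g z0) (at z0)"
    unfolding u_def using gd[OF z0] by (auto intro!: derivative_eq_intros)
  have u0: "u z0 = 0" by (simp add: u_def)
  have "(\<phi> has_field_derivative deriv g z0 / (4 * M)) (at z0)"
  proof -
    have "(\<phi> has_field_derivative (deriv g z0 * (u z0 + 4*M) - u z0 * deriv g z0) / (u z0 + 4*M)^2) (at z0)"
      unfolding \<phi>_def[abs_def] using ud den[OF z0]
      by (auto intro!: derivative_eq_intros simp: power2_eq_square)
    thus ?thesis using u0 M by (simp add: power2_eq_square field_simps)
  qed
  hence "deriv \<phi> z0 = deriv g z0 / (4 * M)" by (rule DERIV_imp_deriv)
  with dp have "norm (deriv g z0) / (4 * M) \<le> 1 / \<rho>" using M by (simp add: norm_divide)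
  hence "norm (deriv g z0) \<le> 4 * M / \<rho>" using M rho by (simp add: field_simps)
  thus ?thesis using df by simp
qed

lemma ball_in_Omega1:
  assumes L: "LL D \<ge> 2" and s: "s \<in> Omega2 D"
  shows "ball s (1 / LL D) \<subseteq> Omega1 D"
proof
  fix z assume z: "z \<in> ball s (1 / LL D)"
  define L where "L = LL D"
  have Lp: "L > 0" using L L_def by simp
  have al: "alpha D = 1 / L^2" unfolding alpha_def L_def[symmetric] using Lp
    by (simp add: powr_minus powr_realpow inverse_eq_divide)
  have sq: "sqrt (alpha D) = 1 / L" using al Lp by (simp add: real_sqrt_divide)
  have d: "norm (z - s) < 1 / L" using z L_def by (simp add: dist_norm norm_minus_commute)
  have re: "\<bar>Re (z - s)\<bar> < 1 / L" using d abs_Re_le_cmod[of "z - s"] by linarith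
  have im: "\<bar>Im (z - s)\<bar> < 1 / L" using d abs_Im_le_cmod[of "z - s"] by linarith
  have s1: "- (1/10) * alpha D * ln L < Re (s - s0 D)" "Re (s - s0 D) < 1/2"
    "\<bar>Im (s - s0 D)\<bar> < 1 + 10 * L" using s unfolding Omega2_def L_def by auto
  have lnL: "ln L \<le> L" using Lp ln_le_minus_one[of L] by linarith
  have "(1/10) * alpha D * ln L \<le> 1 / L"
  proof -
    have "(1/10) * alpha D * ln L = ln L / (10 * L^2)" using al by simp
    also have "\<dots> \<le> L / (10 * L^2)" using lnL Lp by (intro divide_right_mono) auto
    also have "\<dots> \<le> 1 / L" using Lp by (simp add: power2_eq_square field_simps)
    finally show ?thesis .
  qed
  moreover have "1 / L \<le> 1/2" using L L_def by simp
  moreover have "1 / L \<le> 10 * L"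
  proof -
    have "1 \<le> L * (L * 10)" proof -
      have "2 * 20 \<le> L * (L * 10)" using L L_def by (intro mult_mono) auto
      thus ?thesis by simp
    qed
    thus ?thesis using Lp by (simp add: field_simps)
  qed
  moreover have "Re (z - s0 D) = Re (s - s0 D) + Re (z - s)" "Im (z - s0 D) = Im (s - s0 D) + Im (z - s)" by simp_all
  ultimately have "- 2 * (1 / L) < Re (z - s0 D)" "Re (z - s0 D) < 1" "\<bar>Im (z - s0 D)\<bar> < 1 + 20 * L"
    using s1 re im by linarith+
  thus "z \<in> Omega1 D" unfolding Omega1_def L_def[symmetric] sq by simp
qed

lemma main_bound:
  fixes D :: nat and chi \<psi> :: "nat \<Rightarrow> complex" and s :: complex
  assumes D: "real D \<ge> 9" and ps: "\<psi> \<in> PsiStar D chi" and s: "s \<in> Omega2 D"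
  shows "norm (deriv (FF D chi \<psi>) s / FF D chi \<psi> s) \<le> 40 * LL D * ln (LL D)"
proof -
  define L where "L = LL D"
  have "ln (9::real) \<ge> 2"
  proof -
    have "exp (2::real) \<le> 9"
    proof -
      have "exp (1::real) \<le> 3" using exp_le by simp
      hence "exp (1::real) ^ 2 \<le> 3 ^ 2" by (intro power_mono) auto
      moreover have "exp (2::real) = exp 1 ^ 2" by (simp add: power2_eq_square flip: exp_add)
      ultimately show ?thesis by simp
    qed
    hence "ln (exp 2) \<le> ln (9::real)" by (subst ln_le_cancel_iff) auto
    thus ?thesis by simp
  qed
  moreover have "ln 9 \<le> ln (real D)" using D by (subst ln_le_cancel_iff) auto
  ultimately have L2: "L \<ge> 2" unfolding L_def LL_def by linarith
  have Lp: "L > 0" using L2 by simp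
  have lnL: "ln L \<le> L" using Lp ln_le_minus_one[of L] by linarith
  have lnLp: "ln L > 0" using L2 by simp
  define B where "B = L^3 * ln L"
  have Bp: "B > 0" unfolding B_def using Lp lnLp by simp
  define F where "F = FF D chi \<psi>"
  define G where "G = GG D chi \<psi>"
  have sub: "ball s (1 / L) \<subseteq> Omega1 D" using ball_in_Omega1[OF _ s] L2 L_def by simp
  have FGb: "norm (F z) + norm (G z) < B" if "z \<in> Omega1 D" for z
  proof -
    have "ereal (norm (F z) + norm (G z)) \<le> (SUP s\<in>Omega1 D. ereal (norm (FF D chi \<psi> s) + norm (GG D chi \<psi> s)))"
      using that unfolding F_def G_def by (rule SUP_upper)
    also have "\<dots> < ereal B" using ps unfolding PsiStar_def B_def L_def by auto
    finally show ?thesis by simp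
  qed
  have FG1: "norm (F z * G z - 1) < 1/2" if "z \<in> Omega1 D" for z
  proof -
    have "ereal (norm (F z * G z - 1)) \<le> (SUP s\<in>Omega1 D. ereal (norm (FF D chi \<psi> s * GG D chi \<psi> s - 1)))"
      using that unfolding F_def G_def by (rule SUP_upper)
    also have "\<dots> < ereal (1/2)" using ps unfolding PsiStar_def by auto
    finally show ?thesis by simp
  qed
  have Fbd: "1 / (2 * B) < norm (F z) \<and> norm (F z) < B" if "z \<in> Omega1 D" for z
  proof -
    have a: "norm (F z) < B" "norm (G z) < B" using FGb[OF that] norm_ge_zero[of "F z"] norm_ge_zero[of "G z"] by linarith+
    have "1 - norm (F z * G z) \<le> norm (F z * G z - 1)"
      by (metis norm_minus_commute norm_one norm_triangle_ineq2)
    hence b: "norm (F z) * norm (G z) > 1/2" using FG1[OF that] by (simp add: norm_mult)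
    have "norm (F z) * norm (G z) \<le> norm (F z) * B" using a by (intro mult_left_mono) auto
    hence "norm (F z) * B > 1/2" using b by linarith
    hence "norm (F z) > 1 / (2 * B)" using Bp by (simp add: field_simps)
    thus ?thesis using a by simp
  qed
  define M where "M = ln (2 * B)"
  have B1: "2 * B > 1"
  proof -
    have "L^3 \<ge> 2^3" using L2 by (intro power_mono) auto
    hence "L^3 \<ge> 8" by simp
    moreover have "ln L \<ge> ln 2" using L2 by simp
    moreover have "ln (2::real) > 1/2"
    proof -
      have "exp (1/2::real) ^ 2 = exp 1" by (simp add: power2_eq_square flip: exp_add)
      hence "exp (1/2::real) ^ 2 < 2 ^ 2" using exp_le by simp
      hence "exp (1/2::real) < 2" using power_less_imp_less_base by fastforce
      hence "ln (exp (1/2::real)) < ln 2" by (subst ln_less_cancel_iff) auto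
      thus ?thesis by simp
    qed
    ultimately have "ln L \<ge> 1/2" by linarith
    with \<open>L^3 \<ge> 8\<close> have "L^3 * ln L \<ge> 8 * (1/2)" using Lp by (intro mult_mono) auto
    thus ?thesis unfolding B_def by simp
  qed
  have Mp: "M > 0" unfolding M_def using B1 by simp
  have hol: "F holomorphic_on ball s (1 / L)" unfolding F_def FF_def
    by (intro holomorphic_intros) auto
  have nz: "F z \<noteq> 0" if "z \<in> ball s (1 / L)" for z
    proof -
    have "z \<in> Omega1 D" using that sub by auto
    moreover have "1 / (2 * B) > 0" using Bp by simp
    ultimately show ?thesis using Fbd[of z] by auto
  qed
  have lb: "\<bar>ln (norm (F z))\<bar> \<le> M" if "z \<in> ball s (1 / L)" for z
  proof -
    have z: "z \<in> Omega1 D" using that sub by auto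
    have fp: "norm (F z) > 0" proof -
      have "1 / (2 * B) > 0" using Bp by simp
      thus ?thesis using Fbd[OF z] by linarith
    qed
    have "ln (norm (F z)) < ln B" using Fbd[OF z] fp Bp by (subst ln_less_cancel_iff) auto
    moreover have "ln B \<le> M" unfolding M_def using Bp by simp
    moreover have "ln (1 / (2 * B)) < ln (norm (F z))" using Fbd[OF z] fp Bp by (subst ln_less_cancel_iff) auto
    moreover have "ln (1 / (2 * B)) = - M" unfolding M_def using Bp by (simp add: ln_div)
    ultimately show ?thesis by linarith
  qed
  have "norm (deriv F s / F s) \<le> 4 * M / (1 / (2 * L))"
    by (rule core[OF hol nz lb]) (use Lp Mp in \<open>auto simp: field_simps\<close>)
  also have "\<dots> = 8 * L * M" using Lp by (simp add: field_simps)
  also have "\<dots> \<le> 8 * L * (5 * ln L)"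
  proof -
    have "2 * B \<le> L ^ 5"
    proof -
      have "2 * B = 2 * L^3 * ln L" unfolding B_def by simp
      also have "\<dots> \<le> L * L^3 * L" using L2 lnL lnLp Lp by (intro mult_mono) auto
      also have "\<dots> = L ^ 5" by (simp add: power_numeral_reduce)
      finally show ?thesis .
    qed
    hence "M \<le> ln (L^5)" unfolding M_def using Bp Lp by (subst ln_le_cancel_iff) auto
    also have "\<dots> = 5 * ln L" using Lp by (simp add: ln_realpow)
    finally show ?thesis using Lp by simp
  qed
  finally show "norm (deriv (FF D chi \<psi>) s / FF D chi \<psi> s) \<le> 40 * LL D * ln (LL D)"
    unfolding F_def L_def by simp
qed


theorem lemma2p8:
  shows "\<exists>C D0::real. \<forall>(D::nat) (chi::nat \<Rightarrow> complex) (\<psi>::nat \<Rightarrow> complex) (s::complex).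
           real D \<ge> D0 \<longrightarrow> real_primitive_char D chi \<longrightarrow> \<psi> \<in> PsiStar D chi \<longrightarrow> s \<in> Omega2 D \<longrightarrow>
           norm (deriv (FF D chi \<psi>) s / FF D chi \<psi> s) \<le> C * LL D * ln (LL D)"
  apply (rule exI[of _ 40], rule exI[of _ 9])
  using main_bound by blast

end
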